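(* Let $k\ge 3$ and let $\mathcal G$ be an exactly $2$-intersecting family of $k$ compact convex sets in the plane. Then the union complexity of $\mathcal G$ is at least $\binom k2$.
   Context: A finite family of sets is exactly $2$-intersecting if every two of its members intersect but no three of its members have a common point. The union complexity of a finite family $\mathcal G$ of planar regions is the number of vertices (points belonging to the boundaries of two distinct members of $\mathcal G$) that lie on the boundary of $\bigcup_{G\in\mathcal G}G$. *)

theory Defs
  imports "HOL-Analysis.Analysis"
begin

definition exactly_2_intersecting :: "'a set set \<Rightarrow> bool" where
  "exactly_2_intersecting G \<longleftrightarrow>
     (\<forall>A\<in>G. \<forall>B\<in>G. A \<noteq> B \<longrightarrow> A \<inter> B \<noteq> {}) \<and>
     (\<forall>A\<in>G. \<forall>B\<in>G. \<forall>C\<in>G. A \<noteq> B \<and> A \<noteq> C \<and> B \<noteq> C \<longrightarrow> A \<inter> B \<inter> C = {})"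

definition union_vertices :: "('a::topological_space) set set \<Rightarrow> 'a set" where
  "union_vertices G =
     {p. p \<in> frontier (\<Union>G) \<and>
         (\<exists>A\<in>G. \<exists>B\<in>G. A \<noteq> B \<and> p \<in> frontier A \<and> p \<in> frontier B)}"

end

theory Submission
  imports Defs
begin

lemma frontier_connected_plane:
  fixes A :: "(real^2) set"
  assumes "compact A" "convex A"
  shows "connected (frontier A)"
proof (cases "interior A = {}")
  case True
  then have "frontier A = A" using assms
    by (simp add: frontier_def compact_imp_closed)
  then show ?thesis using assms convex_connected by simp
next
  case False
  then have "aff_dim A = 2" using aff_dim_nonempty_interior by fastforce
  then have "connected (rel_frontier A)"
    using connected_sphere_gen assms compact_imp_bounded by fastforce
  then show ?thesis using rel_frontier_nonempty_interior[OF False] by simp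
qed

lemma pair_vertex:
  fixes A B :: "(real^2) set"
  assumes cA: "compact A" "convex A" and cB: "compact B" "convex B"
    and ne: "A \<inter> B \<noteq> {}" and nAB: "\<not> A \<subseteq> B" and nBA: "\<not> B \<subseteq> A"
  shows "\<exists>p\<in>A \<inter> B. p \<in> frontier A \<and> p \<in> frontier B \<and> p \<notin> interior (A \<union> B)"
proof (rule ccontr)
  assume H: "\<not> ?thesis"
  let ?X = "frontier A"
  have con: "connected ?X" using frontier_connected_plane cA by blast
  have clA: "closed A" and clB: "closed B" using cA cB compact_imp_closed by auto
  have XB: "B \<inter> ?X \<noteq> {}"
    using connected_Int_frontier[of B A] convex_connected cB ne nBA by blast
  have XnB: "?X - B \<noteq> {}"
  proof
    assume "?X - B = {}"
    then have "?X \<subseteq> B" by blast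
    then have "convex hull ?X \<subseteq> B" using cB hull_minimal by blast
    then show False using Krein_Milman_frontier[OF cA(2) cA(1)] nAB by simp
  qed
  have disj: "(- B) \<inter> interior (A \<union> B) \<inter> ?X = {}"
  proof (rule ccontr)
    assume "\<not> ?thesis"
    then obtain x where x: "x \<notin> B" "x \<in> interior (A \<union> B)" "x \<in> ?X" by blast
    obtain e where e: "e > 0" "ball x e \<subseteq> A \<union> B" using x(2) open_contains_ball by (meson interior_subset open_interior subset_iff) 
    have "open (- B)" using clB by auto
    then obtain e2 where e2: "e2 > 0" "ball x e2 \<subseteq> - B" using x(1) open_contains_ball by blast
    have "ball x (min e e2) \<subseteq> A"
    proof
      fix y assume "y \<in> ball x (min e e2)"
      then have "y \<in> A \<union> B" "y \<notin> B" using e e2 by auto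
      then show "y \<in> A" by blast
    qed
    moreover have "x \<in> ball x (min e e2)" using e e2 by simp
    ultimately have "x \<in> interior A" using interior_maximal[OF \<open>ball x (min e e2) \<subseteq> A\<close> open_ball] by blast
    then show False using x(3) by (simp add: frontier_def)
  qed
  have cov: "?X \<subseteq> (- B) \<union> interior (A \<union> B)"
  proof
    fix x assume x: "x \<in> ?X"
    show "x \<in> (- B) \<union> interior (A \<union> B)"
    proof (cases "x \<in> B")
      case True
      have "x \<in> A" using x clA frontier_subset_closed by blast
      have "x \<in> frontier B" if "x \<notin> interior B"
        using True that clB by (simp add: frontier_def)
      moreover have "interior B \<subseteq> interior (A \<union> B)" by (simp add: interior_mono)
      ultimately show ?thesis using H True \<open>x \<in> A\<close> x by blast
    qed simp
  qed
  have "(- B) \<inter> ?X = {} \<or> interior (A \<union> B) \<inter> ?X = {}"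
    using connectedD[OF con _ open_interior disj cov] clB by auto
  moreover have "interior (A \<union> B) \<inter> ?X \<noteq> {}"
  proof -
    obtain x where x: "x \<in> B" "x \<in> ?X" using XB by blast
    then show ?thesis using cov disj by blast
  qed
  ultimately show False using XnB by blast
qed

theorem lemma3p3:
  fixes G :: "(real^2) set set" and k :: nat
  assumes "k \<ge> 3"
    and "finite G" and "card G = k"
    and "\<forall>A\<in>G. compact A \<and> convex A"
    and "exactly_2_intersecting G"
  shows "infinite (union_vertices G) \<or> card (union_vertices G) \<ge> k choose 2"
proof -
  have ex2: "\<And>A B. A \<in> G \<Longrightarrow> B \<in> G \<Longrightarrow> A \<noteq> B \<Longrightarrow> A \<inter> B \<noteq> {}"
    using assms(5) unfolding exactly_2_intersecting_def by blast
  have ex3: "\<And>A B C. A \<in> G \<Longrightarrow> B \<in> G \<Longrightarrow> C \<in> G \<Longrightarrow> A \<noteq> B \<Longrightarrow> A \<noteq> C \<Longrightarrow> B \<noteq> C \<Longrightarrow> A \<inter> B \<inter> C = {}"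
    using assms(5) unfolding exactly_2_intersecting_def by blast
  have pair: "\<exists>p. p \<in> A \<and> p \<in> B \<and> p \<in> union_vertices G"
    if AB: "A \<in> G" "B \<in> G" "A \<noteq> B" for A B
  proof -
    have "card (G - {A, B}) \<ge> 1" using assms(1-3) AB
      by (simp add: card_Diff_subset)
    then obtain C where C: "C \<in> G" "C \<noteq> A" "C \<noteq> B"
    proof -
      have "G - {A, B} \<noteq> {}" 
      proof -
        have "0 < card (G - {A, B})" using \<open>card (G - {A, B}) \<ge> 1\<close> by simp
        then show ?thesis using card_gt_0_iff by blast
      qed
      then show ?thesis using that by blast
    qed
    have nAB: "\<not> A \<subseteq> B"
    proof
      assume "A \<subseteq> B"
      then have "A \<inter> B \<inter> C = A \<inter> C" by blast
      then show False using ex3[of A B C] ex2[of A C] AB C by argo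
    qed
    have nBA: "\<not> B \<subseteq> A"
    proof
      assume "B \<subseteq> A"
      then have "A \<inter> B \<inter> C = B \<inter> C" by blast
      then show False using ex3[of A B C] ex2[of B C] AB C by argo
    qed
    obtain p where p: "p \<in> A \<inter> B" "p \<in> frontier A" "p \<in> frontier B" "p \<notin> interior (A \<union> B)"
      using pair_vertex[of A B] assms(4) AB ex2[of A B] nAB nBA by blast
    let ?D = "\<Union>(G - {A, B})"
    have "closed ?D" using assms(2,4) compact_imp_closed by (intro closed_Union) auto
    have pD: "p \<notin> ?D"
    proof
      assume "p \<in> ?D"
      then obtain C where "C \<in> G" "C \<noteq> A" "C \<noteq> B" "p \<in> C" by blast
      then show False using ex3[of A B C] AB p(1) by blast
    qed
    have "p \<notin> interior (\<Union>G)"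
    proof
      assume "p \<in> interior (\<Union>G)"
      moreover have "\<forall>x\<in>interior (\<Union>G). \<exists>e>0. ball x e \<subseteq> interior (\<Union>G)"
        using open_interior[of "\<Union>G"] unfolding open_contains_ball .
      ultimately obtain e where e0: "e > 0" "ball p e \<subseteq> interior (\<Union>G)" by blast
      have e: "e > 0" "ball p e \<subseteq> \<Union>G" using e0 interior_subset[of "\<Union>G"] by auto
      have "open (- ?D)" using \<open>closed ?D\<close> by (simp add: closed_def)
      then have "\<forall>x\<in>- ?D. \<exists>e>0. ball x e \<subseteq> - ?D" unfolding open_contains_ball .
      moreover have "p \<in> - ?D" using pD by (simp only: Compl_iff not_False_eq_True)
      ultimately have "\<exists>e>0. ball p e \<subseteq> - ?D" by (rule bspec)
      then obtain e2 where e2: "e2 > 0" "ball p e2 \<subseteq> - ?D" by blast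
      have "ball p (min e e2) \<subseteq> A \<union> B"
      proof
        fix y assume y: "y \<in> ball p (min e e2)"
        then have "y \<in> \<Union>G" using e(2) by auto
        then obtain C where C: "C \<in> G" "y \<in> C" by blast
        have "y \<notin> ?D" using y e2(2) by auto
        then have "C \<notin> G - {A, B}" using C by blast
        then show "y \<in> A \<union> B" using C by blast
      qed
      moreover have "p \<in> ball p (min e e2)" using e e2 by simp
      ultimately have "p \<in> interior (A \<union> B)" using interior_maximal[OF \<open>ball p (min e e2) \<subseteq> A \<union> B\<close> open_ball] by blast
      then show False using p(4) by blast
    qed
    moreover have "p \<in> \<Union>G" using p(1) AB(1) by blast
    then have "p \<in> closure (\<Union>G)" by (rule subsetD[OF closure_subset])
    ultimately have fr: "p \<in> frontier (\<Union>G)" unfolding frontier_def by (rule DiffI[rotated])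
    have "p \<in> union_vertices G" unfolding union_vertices_def mem_Collect_eq
      using fr AB p(2,3) by (intro conjI bexI[of _ A] bexI[of _ B]) auto
    then show ?thesis using p(1) by blast
  qed
  define P where "P = {e. e \<subseteq> G \<and> card e = 2}"
  have cardP: "card P = k choose 2" using n_subsets[OF assms(2)] assms(3) P_def by simp
  define f where "f e = (SOME p. p \<in> \<Inter>e \<and> p \<in> union_vertices G)" for e
  have fP: "f e \<in> \<Inter>e \<and> f e \<in> union_vertices G" if "e \<in> P" for e
  proof -
    obtain A B where e: "e = {A, B}" "A \<noteq> B" using \<open>e \<in> P\<close> unfolding P_def
      by (auto simp: card_2_iff)
    then have "A \<in> G" "B \<in> G" using that P_def by auto
    then obtain p where "p \<in> A \<and> p \<in> B \<and> p \<in> union_vertices G" using pair e by blast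
    then have "\<exists>p. p \<in> \<Inter>e \<and> p \<in> union_vertices G" using e by auto
    then show ?thesis unfolding f_def by (rule someI_ex)
  qed
  have inj: "inj_on f P"
  proof
    fix e1 e2 assume e: "e1 \<in> P" "e2 \<in> P" "f e1 = f e2"
    show "e1 = e2"
    proof (rule ccontr)
      assume ne: "e1 \<noteq> e2"
      obtain A B where e1: "e1 = {A, B}" "A \<noteq> B" using e(1) unfolding P_def
        by (auto simp: card_2_iff)
      obtain C D where e2: "e2 = {C, D}" "C \<noteq> D" using e(2) unfolding P_def
        by (auto simp: card_2_iff)
      have G: "A \<in> G" "B \<in> G" "C \<in> G" "D \<in> G" using e e1 e2 P_def by auto
      have pin: "f e1 \<in> A" "f e1 \<in> B" "f e1 \<in> C" "f e1 \<in> D"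
        using fP[OF e(1)] fP[OF e(2)] e(3) e1 e2 by auto
      have "C \<notin> {A, B} \<or> D \<notin> {A, B}" using ne e1 e2 by auto
      then show False
      proof
        assume "C \<notin> {A, B}"
        then have "C \<noteq> A" "C \<noteq> B" by auto
        then have "A \<inter> B \<inter> C = {}" using ex3[of A B C] G e1(2) by blast
        then show False using pin by blast
      next
        assume "D \<notin> {A, B}"
        then have "D \<noteq> A" "D \<noteq> B" by auto
        then have "A \<inter> B \<inter> D = {}" using ex3[of A B D] G e1(2) by blast
        then show False using pin by blast
      qed
    qed
  qed
  have "f ` P \<subseteq> union_vertices G"
  proof
    fix y assume "y \<in> f ` P"
    then obtain e where "e \<in> P" "y = f e" by blast
    then show "y \<in> union_vertices G" using fP[of e] by simp
  qed
  then have "finite (union_vertices G) \<Longrightarrow> card P \<le> card (union_vertices G)"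
    using card_inj_on_le[OF inj] by simp
  then show ?thesis using cardP by auto
qed

end
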